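(* Let $m\ge 2$ be an integer and let $n$ be a positive integer with $m^j\le n<m^{j+1}$ for some integer $j\ge 0$, with base $m$ representation $n=\alpha_j m^j+\cdots+\alpha_1 m+\alpha_0$ ($\alpha_j>0$, $0\le\alpha_i\le m-1$). Then the number $b_m(n)$ of $m$-ary partitions of $n$ satisfies \[ b_m(n)=\sum_{k_j=0}^{\alpha_j}\ \sum_{k_{j-1}=0}^{\alpha_{j-1}+mk_j}\cdots\sum_{k_1=0}^{\alpha_1+mk_2}1, \] i.e. $b_m(n)$ is the number of integer tuples $(k_j,\ldots,k_1)$ with $0\le k_j\le\alpha_j$ and $0\le k_t\le \alpha_t+mk_{t+1}$ for $1\le t\le j-1$. In particular $b_m(n)=1$ when $j=0$.
   Context: An $m$-ary partition of a positive integer $n$ is a partition of $n$ in which every part is a power of $m$ (i.e. one of $1,m,m^2,\ldots$). $b_m(n)$ denotes the number of $m$-ary partitions of $n$. *)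

theory Defs
  imports Main "HOL-Library.Multiset"
begin

definition m_ary_partitions :: "nat \<Rightarrow> nat \<Rightarrow> nat multiset set" where
  "m_ary_partitions m n = {P. (\<forall>x\<in>#P. \<exists>i. x = m ^ i) \<and> sum_mset P = n}"

definition b :: "nat \<Rightarrow> nat \<Rightarrow> nat" where
  "b m n = card (m_ary_partitions m n)"

definition digit :: "nat \<Rightarrow> nat \<Rightarrow> nat \<Rightarrow> nat" where
  "digit m n i = n div m ^ i mod m"

end

theory Submission
  imports Defs
begin

lemma sum_mset_rep:
  "finite A \<Longrightarrow> sum_mset (\<Sum>i\<in>A. replicate_mset (c i) ((m::nat) ^ i)) = (\<Sum>i\<in>A. c i * m ^ i)"
  by (induction A rule: finite_induct) auto

lemma mem_le_sum_mset: "(x::nat) \<in># P \<Longrightarrow> x \<le> sum_mset P"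
proof -
  assume "x \<in># P"
  then obtain Q where "P = add_mset x Q" by (blast dest: multi_member_split)
  then show ?thesis by simp
qed

lemma step1:
  fixes m n j :: nat
  assumes m: "m \<ge> 2" and "n < m ^ (j + 1)"
  shows "b m n = card {c :: nat \<Rightarrow> nat. (\<forall>i>j. c i = 0) \<and> (\<Sum>i\<in>{0..j}. c i * m ^ i) = n}"
proof -
  define C where "C = {c :: nat \<Rightarrow> nat. (\<forall>i>j. c i = 0) \<and> (\<Sum>i\<in>{0..j}. c i * m ^ i) = n}"
  define \<phi> where "\<phi> = (\<lambda>P::nat multiset. \<lambda>i. if i \<le> j then count P (m ^ i) else 0)"
  define \<psi> where "\<psi> = (\<lambda>c. \<Sum>i\<in>{0..j}. replicate_mset (c i) (m ^ i))"
  have inj: "\<And>a b. m ^ a = m ^ b \<longleftrightarrow> a = b" using m by (simp add: power_inject_exp)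
  have cnt: "count (\<psi> c) x = (\<Sum>i\<in>{0..j}. if x = m ^ i then c i else 0)" for c x
    unfolding \<psi>_def count_sum by (intro sum.cong) auto
  have cnt2: "count (\<psi> c) (m ^ i) = (if i \<le> j then c i else 0)" for c i
  proof -
    have "count (\<psi> c) (m ^ i) = (\<Sum>k\<in>{0..j}. if k = i then c k else 0)"
      unfolding cnt by (intro sum.cong) (auto simp: inj)
    also have "\<dots> = (if i \<le> j then c i else 0)" by (simp add: sum.delta)
    finally show ?thesis .
  qed
  have small: "i \<le> j" if P: "P \<in> m_ary_partitions m n" and x: "m ^ i \<in># P" for P i
  proof -
    have "m ^ i \<le> sum_mset P" using x by (rule mem_le_sum_mset)
    also have "\<dots> = n" using P by (simp add: m_ary_partitions_def)
    finally have "m ^ i < m ^ (j+1)" using assms by simp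
    moreover have "1 < m" using m by simp
    ultimately have "i < j + 1" using power_less_imp_less_exp by blast
    then show ?thesis by simp
  qed
  have psiphi: "\<psi> (\<phi> P) = P" if P: "P \<in> m_ary_partitions m n" for P
  proof (rule multiset_eqI)
    fix x
    show "count (\<psi> (\<phi> P)) x = count P x"
    proof (cases "\<exists>i. x = m ^ i")
      case True
      then obtain i where xi: "x = m ^ i" by blast
      show ?thesis
      proof (cases "i \<le> j")
        case True thus ?thesis using xi by (simp add: cnt2 \<phi>_def)
      next
        case False
        hence "x \<notin># P" using small[OF P] xi by auto
        thus ?thesis using xi False by (simp add: cnt2 \<phi>_def count_eq_zero_iff)
      qed
    next
      case False
      hence "x \<notin># P" using P by (auto simp: m_ary_partitions_def)
      thus ?thesis using False by (simp add: cnt count_eq_zero_iff)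
    qed
  qed
  have sumpsi: "sum_mset (\<psi> c) = (\<Sum>i\<in>{0..j}. c i * m ^ i)" for c
    unfolding \<psi>_def by (rule sum_mset_rep) simp
  have "bij_betw \<phi> (m_ary_partitions m n) C"
  proof (rule bij_betw_byWitness[where f'=\<psi>])
    show "\<forall>a\<in>m_ary_partitions m n. \<psi> (\<phi> a) = a" using psiphi by blast
    show "\<forall>a'\<in>C. \<phi> (\<psi> a') = a'"
    proof
      fix c assume c: "c \<in> C"
      show "\<phi> (\<psi> c) = c"
      proof
        fix i show "\<phi> (\<psi> c) i = c i"
          using c by (cases "i \<le> j") (simp_all add: \<phi>_def cnt2 C_def)
      qed
    qed
    show "\<phi> ` m_ary_partitions m n \<subseteq> C"
    proof
      fix c assume "c \<in> \<phi> ` m_ary_partitions m n"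
      then obtain P where P: "P \<in> m_ary_partitions m n" and c: "c = \<phi> P" by blast
      have "(\<Sum>i\<in>{0..j}. c i * m ^ i) = sum_mset (\<psi> c)" by (simp add: sumpsi)
      also have "\<dots> = n" using psiphi[OF P] P c by (simp add: m_ary_partitions_def)
      finally show "c \<in> C" unfolding C_def using c by (simp add: \<phi>_def)
    qed
    show "\<psi> ` C \<subseteq> m_ary_partitions m n"
    proof
      fix P assume "P \<in> \<psi> ` C"
      then obtain c where c: "c \<in> C" and P: "P = \<psi> c" by blast
      have "\<forall>x\<in>#P. \<exists>i. x = m ^ i"
      proof
        fix x assume "x \<in># P"
        hence "count P x \<noteq> 0" by simp
        hence nz: "(\<Sum>i\<in>{0..j}. if x = m ^ i then c i else 0) \<noteq> 0" using P cnt by simp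
        have "\<exists>i\<in>{0..j}. (if x = m ^ i then c i else 0) \<noteq> 0"
        proof (rule ccontr)
          assume "\<not> (\<exists>i\<in>{0..j}. (if x = m ^ i then c i else 0) \<noteq> 0)"
          hence "\<forall>i\<in>{0..j}. (if x = m ^ i then c i else 0) = 0" by blast
          hence "(\<Sum>i\<in>{0..j}. if x = m ^ i then c i else 0) = 0" by (rule sum.neutral)
          with nz show False by contradiction
        qed
        then obtain i where "(if x = m ^ i then c i else 0) \<noteq> 0" by blast
        thus "\<exists>i. x = m ^ i" by (auto split: if_splits)
      qed
      moreover have "sum_mset P = n" using P c by (simp add: sumpsi C_def)
      ultimately show "P \<in> m_ary_partitions m n" by (simp add: m_ary_partitions_def)
    qed
  qed
  thus ?thesis unfolding b_def C_def by (rule bij_betw_same_card)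
qed


lemma step2:
  fixes m n j :: nat
  shows "card {c :: nat \<Rightarrow> nat. (\<forall>i>j. c i = 0) \<and> (\<Sum>i\<in>{0..j}. c i * m ^ i) = n}
       = card {K :: nat \<Rightarrow> nat. (\<forall>t. t \<notin> {1..j} \<longrightarrow> K t = 0) \<and> m * K 1 \<le> n \<and>
                 (\<forall>t. 1 \<le> t \<and> t \<le> j - 1 \<longrightarrow> m * K (t + 1) \<le> K t)}"
proof -
  define C where "C = {c :: nat \<Rightarrow> nat. (\<forall>i>j. c i = 0) \<and> (\<Sum>i\<in>{0..j}. c i * m ^ i) = n}"
  define L where "L = {K :: nat \<Rightarrow> nat. (\<forall>t. t \<notin> {1..j} \<longrightarrow> K t = 0) \<and> m * K 1 \<le> n \<and>
                 (\<forall>t. 1 \<le> t \<and> t \<le> j - 1 \<longrightarrow> m * K (t + 1) \<le> K t)}"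
  define F where "F = (\<lambda>(c::nat\<Rightarrow>nat) t. \<Sum>i\<in>{t..j}. c i * m ^ (i - t))"
  have Frec: "F c t = c t + m * F c (t + 1)" if "t \<le> j" for c t
  proof -
    have "{t..j} = insert t {Suc t..j}" using that by auto
    hence "F c t = c t * m ^ (t - t) + (\<Sum>i\<in>{Suc t..j}. c i * m ^ (i - t))"
      unfolding F_def by simp
    also have "(\<Sum>i\<in>{Suc t..j}. c i * m ^ (i - t)) = (\<Sum>i\<in>{Suc t..j}. m * (c i * m ^ (i - Suc t)))"
    proof (intro sum.cong refl)
      fix i assume "i \<in> {Suc t..j}"
      hence "i - t = Suc (i - Suc t)" by auto
      thus "c i * m ^ (i - t) = m * (c i * m ^ (i - Suc t))" by simp
    qed
    also have "\<dots> = m * F c (t + 1)" unfolding F_def by (simp add: sum_distrib_left)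
    finally show ?thesis by simp
  qed
  have Fz: "F c t = 0" if "j < t" for c t using that unfolding F_def by simp
  have F0: "F c 0 = (\<Sum>i\<in>{0..j}. c i * m ^ i)" for c unfolding F_def by simp
  define f where "f = (\<lambda>c t. if t = 0 then 0 else F c t)"
  define g where "g = (\<lambda>K i. if i = 0 then n - m * K 1 else if i \<le> j then K i - m * K (i + 1) else (0::nat))"
  have fg: "F (g K) t = K t" if K: "K \<in> L" and t: "1 \<le> t" for K t
  proof (cases "t \<le> j + 1")
    case True
    show ?thesis using True
    proof (induction t rule: inc_induct)
      case base
      thus ?case using K by (simp add: Fz L_def)
    next
      case (step u)
      have u: "u \<le> j" "1 \<le> u" using step.hyps t by auto
      have le: "m * K (u + 1) \<le> K u"
      proof (cases "u = j")
        case True thus ?thesis using K by (simp add: L_def)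
      next
        case False thus ?thesis using K u by (simp add: L_def)
      qed
      have "F (g K) u = g K u + m * F (g K) (u + 1)" using u by (intro Frec) 
      also have "\<dots> = (K u - m * K (u + 1)) + m * K (u + 1)"
        using u step.IH by (simp add: g_def)
      also have "\<dots> = K u" using le by simp
      finally show ?case .
    qed
  next
    case False thus ?thesis using K by (simp add: Fz L_def)
  qed
  have "bij_betw f C L"
  proof (rule bij_betw_byWitness[where f'=g])
    show "\<forall>c\<in>C. g (f c) = c"
    proof
      fix c assume c: "c \<in> C"
      have n: "c 0 + m * F c 1 = n" using Frec[of 0 c] F0[of c] c by (simp add: C_def)
      show "g (f c) = c"
      proof
        fix i show "g (f c) i = c i"
          using c n Frec[of i c] by (auto simp: g_def f_def C_def)
      qed
    qed
    show "\<forall>K\<in>L. f (g K) = K"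
    proof
      fix K assume K: "K \<in> L"
      show "f (g K) = K"
      proof
        fix t show "f (g K) t = K t"
          using K fg[OF K, of t] by (auto simp: f_def L_def)
      qed
    qed
    show "f ` C \<subseteq> L"
    proof
      fix K assume "K \<in> f ` C"
      then obtain c where c: "c \<in> C" and K: "K = f c" by blast
      have n: "c 0 + m * F c 1 = n" using Frec[of 0 c] F0[of c] c by (simp add: C_def)
      have "\<forall>t. t \<notin> {1..j} \<longrightarrow> K t = 0" using K by (auto simp: f_def Fz)
      moreover have "m * K 1 \<le> n" using K n by (simp add: f_def)
      moreover have "\<forall>t. 1 \<le> t \<and> t \<le> j - 1 \<longrightarrow> m * K (t + 1) \<le> K t"
      proof (intro allI impI)
        fix t assume "1 \<le> t \<and> t \<le> j - 1"
        hence "t \<le> j" "t \<noteq> 0" by auto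
        thus "m * K (t + 1) \<le> K t" using K Frec[of t c] by (simp add: f_def)
      qed
      ultimately show "K \<in> L" by (simp add: L_def)
    qed
    show "g ` L \<subseteq> C"
    proof
      fix c assume "c \<in> g ` L"
      then obtain K where K: "K \<in> L" and c: "c = g K" by blast
      have "(\<Sum>i\<in>{0..j}. c i * m ^ i) = F c 0" by (simp add: F0)
      also have "\<dots> = c 0 + m * F c 1" using Frec[of 0 c] by simp
      also have "\<dots> = (n - m * K 1) + m * K 1" using fg[OF K, of 1] c by (simp add: g_def)
      also have "\<dots> = n" using K by (simp add: L_def)
      finally show "c \<in> C" using c by (simp add: C_def g_def)
    qed
  qed
  thus ?thesis unfolding C_def L_def by (rule bij_betw_same_card)
qed


lemma step3:
  fixes m n j :: nat
  assumes m: "m \<ge> 2" and nlt: "n < m ^ (j + 1)"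
  shows "card {K :: nat \<Rightarrow> nat. (\<forall>t. t \<notin> {1..j} \<longrightarrow> K t = 0) \<and> m * K 1 \<le> n \<and>
                 (\<forall>t. 1 \<le> t \<and> t \<le> j - 1 \<longrightarrow> m * K (t + 1) \<le> K t)}
       = card {k :: nat \<Rightarrow> nat.
            (\<forall>t. t \<notin> {1..j} \<longrightarrow> k t = 0) \<and>
            k j \<le> digit m n j \<and>
            (\<forall>t. 1 \<le> t \<and> t \<le> j - 1 \<longrightarrow> k t \<le> digit m n t + m * k (t + 1))}"
proof -
  define L where "L = {K :: nat \<Rightarrow> nat. (\<forall>t. t \<notin> {1..j} \<longrightarrow> K t = 0) \<and> m * K 1 \<le> n \<and>
                 (\<forall>t. 1 \<le> t \<and> t \<le> j - 1 \<longrightarrow> m * K (t + 1) \<le> K t)}"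
  define T where "T = {k :: nat \<Rightarrow> nat.
            (\<forall>t. t \<notin> {1..j} \<longrightarrow> k t = 0) \<and>
            k j \<le> digit m n j \<and>
            (\<forall>t. 1 \<le> t \<and> t \<le> j - 1 \<longrightarrow> k t \<le> digit m n t + m * k (t + 1))}"
  define N where "N = (\<lambda>t. n div m ^ t)"
  have mpos: "m > 0" using m by simp
  have Nsuc: "N (t + 1) = N t div m" for t
    unfolding N_def by (simp add: div_mult2_eq[symmetric] power_add mult.commute)
  have Nrec: "N t = digit m n t + m * N (t + 1)" for t
    using mod_mult_div_eq[of "N t" m] unfolding digit_def Nsuc unfolding N_def by linarith
  have Nj: "N j = digit m n j"
  proof -
    have "N j < m" unfolding N_def using nlt mpos
      by (simp add: div_less_iff_less_mult mult.commute)
    thus ?thesis unfolding digit_def N_def by simp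
  qed
  have N1: "m * N 1 \<le> n" unfolding N_def by simp
  have Lbd: "K t \<le> N t" if K: "K \<in> L" and t: "1 \<le> t" "t \<le> j" for K t
    using t(1)
  proof (induction t rule: dec_induct)
    case base
    have "K 1 * m \<le> n" using K by (simp add: L_def mult.commute)
    thus ?case unfolding N_def using mpos by (simp add: less_eq_div_iff_mult_less_eq)
  next
    case (step u)
    have "m * K (u + 1) \<le> K u" using K step.hyps t by (simp add: L_def)
    hence "m * K (u + 1) \<le> N u" using step.IH by linarith
    hence "K (u + 1) \<le> N u div m" using mpos by (simp add: less_eq_div_iff_mult_less_eq mult.commute)
    thus ?case using Nsuc by simp
  qed
  have Tbd: "k t \<le> N t" if k: "k \<in> T" and t: "1 \<le> t" "t \<le> j" for k t
    using t(2)
  proof (induction t rule: inc_induct)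
    case base
    thus ?case using k Nj by (simp add: T_def)
  next
    case (step u)
    have "k u \<le> digit m n u + m * k (u + 1)" using k step.hyps t by (simp add: T_def)
    also have "\<dots> \<le> digit m n u + m * N (u + 1)" using step.IH by simp
    finally show ?case using Nrec[of u] by simp
  qed
  define h where "h = (\<lambda>K t. if 1 \<le> t \<and> t \<le> j then N t - K t else (0::nat))"
  have "bij_betw h L T"
  proof (rule bij_betw_byWitness[where f'=h])
    show "\<forall>K\<in>L. h (h K) = K"
    proof
      fix K assume K: "K \<in> L"
      show "h (h K) = K"
      proof
        fix t show "h (h K) t = K t"
          using K Lbd[OF K, of t] by (auto simp: h_def L_def)
      qed
    qed
    show "\<forall>K\<in>T. h (h K) = K"
    proof
      fix K assume K: "K \<in> T"
      show "h (h K) = K"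
      proof
        fix t show "h (h K) t = K t"
          using K Tbd[OF K, of t] by (auto simp: h_def T_def)
      qed
    qed
    show "h ` L \<subseteq> T"
    proof
      fix k assume "k \<in> h ` L"
      then obtain K where K: "K \<in> L" and k: "k = h K" by blast
      have "\<forall>t. t \<notin> {1..j} \<longrightarrow> k t = 0" using k by (auto simp: h_def)
      moreover have "k j \<le> digit m n j" using k Nj by (simp add: h_def)
      moreover have "\<forall>t. 1 \<le> t \<and> t \<le> j - 1 \<longrightarrow> k t \<le> digit m n t + m * k (t + 1)"
      proof (intro allI impI)
        fix t assume t: "1 \<le> t \<and> t \<le> j - 1"
        have tj: "Suc t \<le> j" using t by linarith
        have a: "m * K (t + 1) \<le> K t" using K t by (simp add: L_def)
        have b: "K (t + 1) \<le> N (t + 1)" using Lbd[OF K, of "t+1"] t by (simp add: tj)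
        hence b': "m * K (t + 1) \<le> m * N (t + 1)" by simp
        have c: "m * (N (t + 1) - K (t + 1)) = m * N (t + 1) - m * K (t + 1)"
          by (simp add: diff_mult_distrib2)
        have kt: "k t = N t - K t" "k (t + 1) = N (t + 1) - K (t + 1)" using k t by (auto simp: h_def)
        show "k t \<le> digit m n t + m * k (t + 1)"
          unfolding kt c using a b' Nrec[of t] by linarith
      qed
      ultimately show "k \<in> T" by (simp add: T_def)
    qed
    show "h ` T \<subseteq> L"
    proof
      fix K assume "K \<in> h ` T"
      then obtain k where k: "k \<in> T" and K: "K = h k" by blast
      have "\<forall>t. t \<notin> {1..j} \<longrightarrow> K t = 0" using K by (auto simp: h_def)
      moreover have "m * K 1 \<le> n"
      proof -
        have "m * K 1 \<le> m * N 1" using K by (simp add: h_def)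
        thus ?thesis using N1 by linarith
      qed
      moreover have "\<forall>t. 1 \<le> t \<and> t \<le> j - 1 \<longrightarrow> m * K (t + 1) \<le> K t"
      proof (intro allI impI)
        fix t assume t: "1 \<le> t \<and> t \<le> j - 1"
        have tj: "Suc t \<le> j" using t by linarith
        have a: "k t \<le> digit m n t + m * k (t + 1)" using k t by (simp add: T_def)
        have b: "k (t + 1) \<le> N (t + 1)" using Tbd[OF k, of "t+1"] t by (simp add: tj)
        hence b': "m * k (t + 1) \<le> m * N (t + 1)" by simp
        have c: "m * (N (t + 1) - k (t + 1)) = m * N (t + 1) - m * k (t + 1)"
          by (simp add: diff_mult_distrib2)
        have kt: "K t = N t - k t" "K (t + 1) = N (t + 1) - k (t + 1)" using K t by (auto simp: h_def)
        show "m * K (t + 1) \<le> K t"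
          unfolding kt c using a b' Nrec[of t] by linarith
      qed
      ultimately show "K \<in> L" by (simp add: L_def)
    qed
  qed
  thus ?thesis unfolding L_def T_def by (rule bij_betw_same_card)
qed

theorem theorem1p2:
  fixes m n j :: nat
  assumes "m \<ge> 2" and "n > 0" and "m ^ j \<le> n" and "n < m ^ (j + 1)"
  shows "b m n = card {k :: nat \<Rightarrow> nat.
            (\<forall>t. t \<notin> {1..j} \<longrightarrow> k t = 0) \<and>
            k j \<le> digit m n j \<and>
            (\<forall>t. 1 \<le> t \<and> t \<le> j - 1 \<longrightarrow> k t \<le> digit m n t + m * k (t + 1))}
       \<and> (j = 0 \<longrightarrow> b m n = 1)"
proof -
  have eq: "b m n = card {k :: nat \<Rightarrow> nat.
            (\<forall>t. t \<notin> {1..j} \<longrightarrow> k t = 0) \<and>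
            k j \<le> digit m n j \<and>
            (\<forall>t. 1 \<le> t \<and> t \<le> j - 1 \<longrightarrow> k t \<le> digit m n t + m * k (t + 1))}"
    using step1[OF assms(1,4)] step2[of j m n] step3[OF assms(1,4)] by simp
  moreover have "j = 0 \<longrightarrow> b m n = 1"
  proof
    assume j: "j = 0"
    have "{k :: nat \<Rightarrow> nat.
            (\<forall>t. t \<notin> {1..j} \<longrightarrow> k t = 0) \<and>
            k j \<le> digit m n j \<and>
            (\<forall>t. 1 \<le> t \<and> t \<le> j - 1 \<longrightarrow> k t \<le> digit m n t + m * k (t + 1))} = {\<lambda>_. 0}"
      using j by (auto simp: fun_eq_iff)
    thus "b m n = 1" using eq by simp
  qed
  ultimately show ?thesis by blast
qed

end
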